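(* Let $N\ge 2$ and $d_0,\dots,d_N,p_1,\dots,p_N,q_0,\dots,q_N\ge 1$ be integers, $d=\sum_{i=0}^N d_i$, $p=\sum_{i=1}^N p_i$, $\mathcal{X}=\prod_{i=0}^N\mathcal{X}_i$ with $\mathcal{X}_i\subset\mathbb{R}^{d_i}$, and $\mathcal{Y}=\prod_{i=1}^N\mathcal{Y}_i$ with $\mathcal{Y}_i\subset\mathbb{R}^{p_i}$. Let $f:\mathcal{X}\to\mathbb{R}$, $g_0:\mathcal{X}\to\mathbb{R}^{q_0}$, $g_i:\mathcal{X}_0\times\mathcal{X}_i\to\mathbb{R}^{q_i}$, $g(\mathbf{x})=(g_0(\mathbf{x}),g_1(\mathbf{x}_0,\mathbf{x}_1),\dots,g_N(\mathbf{x}_0,\mathbf{x}_N))$. For $i\in\{1,\dots,N\}$ let $\mathbf{a}_i\in\mathbb{R}^{p_i}$, $\mathbf{B}_{i,0}\in\mathbb{R}^{p_i\times d_0}$, $\mathbf{B}_{i,i}\in\mathbb{R}^{p_i\times d_i}$, and $\mathbf{C}_{i,j}\in\mathbb{R}^{p_i\times p_j}$ for $j\ne i$, and define the linear coupling functions $h_i(\mathbf{x}_0,\mathbf{x}_i,\mathbf{y}_{-i})=\mathbf{a}_i-\mathbf{B}_{i,0}\mathbf{x}_0-\mathbf{B}_{i,i}\mathbf{x}_i+\sum_{j\ne i}\mathbf{C}_{i,j}\mathbf{y}_j$, with $h=(h_1,\dots,h_N)$. The system $\mathbf{y}=h(\mathbf{x},\mathbf{y})$ reads $\mathbf{C}\mathbf{y}=\mathbf{a}-\mathbf{B}\mathbf{x}$,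 where $\mathbf{a}=(\mathbf{a}_1;\dots;\mathbf{a}_N)$, $\mathbf{B}$ is the $p\times d$ block matrix whose block row $i$ is $(\mathbf{B}_{i,0},0,\dots,0,\mathbf{B}_{i,i},0,\dots,0)$ (with $\mathbf{B}_{i,i}$ in block column $i$, block columns indexed $0,\dots,N$), and $\mathbf{C}=\mathbf{I}_p-\mathbf{K}$ with $\mathbf{K}$ the $p\times p$ block matrix with zero diagonal blocks and off-diagonal blocks $\mathbf{C}_{i,j}$. Assume $\mathbf{C}$ is invertible. Let $\mathcal{S}=\{(\mathbf{x},\mathbf{y})\in\mathcal{X}\times\mathcal{Y}:\mathbf{y}=h(\mathbf{x},\mathbf{y})\}$, and let $L:\mathcal{X}\times\mathcal{Y}\to\mathbb{R}^d$ satisfy $L(\mathbf{x},\mathbf{y})=\mathbf{x}$ for all $(\mathbf{x},\mathbf{y})\in\mathcal{S}$, with $\tilde f=f\circ L$, $\tilde g=g\circ L$ defined on $\mathcal{X}\times\mathcal{Y}$. Consider (P): minimize $f(\mathbf{x})$ subject to $g_0(\mathbf{x})\le 0$, $g_i(\mathbf{x}_0,\mathbf{x}_i)\le0$ ($1\le i\le N$); and (MDO): minimize $\tilde f(\mathbf{x},\mathbf{y})$ over $(\mathbf{x},\mathbf{y})\in\mathcal{X}\times\mathcal{Y}$ subject to $\tilde g(\mathbf{x},\mathbf{y})\le0$ and $\mathbf{y}_i=h_i(\mathbf{x}_0,\mathbf{x}_i,\mathbf{y}_{-i})$ ($1\le i\le N$). Then (MDO) is equivalent to (P) on $\Pi_{\mathcal{X}}(\mathcal{S})=\{\mathbf{x}\in\mathcal{X}:\mathbf{C}^{-1}(\mathbf{a}-\mathbf{B}\mathbf{x})\in\mathcal{Y}\}$,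 i.e. $(\mathbf{x},\mathbf{y})$ is a solution of (MDO) iff $(\mathbf{x},\mathbf{y})\in\mathcal{S}$ and $\mathbf{x}$ is a solution of (P) over this set. Moreover, writing $\boldsymbol{\beta}=-\mathbf{C}^{-1}\mathbf{B}$ in blocks $\boldsymbol{\beta}_{i,j}\in\mathbb{R}^{p_i\times d_j}$ ($1\le i\le N$, $0\le j\le N$) and $\boldsymbol{\alpha}=\mathbf{C}^{-1}\mathbf{a}=(\boldsymbol{\alpha}_1;\dots;\boldsymbol{\alpha}_N)$, and assuming $p_i=d_i$ for $1\le i\le N$, the function $L(\mathbf{x},\mathbf{y})=\big(\mathbf{x}_0,\ \mathbf{x}_1+\mathbf{y}_1-\boldsymbol{\alpha}_1-\sum_{j=0}^N\boldsymbol{\beta}_{1,j}\mathbf{x}_j,\ \dots,\ \mathbf{x}_N+\mathbf{y}_N-\boldsymbol{\alpha}_N-\sum_{j=0}^N\boldsymbol{\beta}_{N,j}\mathbf{x}_j\big)$ satisfies $L(\mathbf{x},\mathbf{y})=\mathbf{x}$ for all $(\mathbf{x},\mathbf{y})\in\mathcal{S}$.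
   Context: "Solution" means a global minimizer among feasible points; inequalities are componentwise. $\mathbf{x}=(\mathbf{x}_0,\dots,\mathbf{x}_N)$ with $\mathbf{x}_i\in\mathbb{R}^{d_i}$, $\mathbf{y}=(\mathbf{y}_1,\dots,\mathbf{y}_N)$ with $\mathbf{y}_i\in\mathbb{R}^{p_i}$, $\mathbf{y}_{-i}=(\mathbf{y}_j)_{j\ne i}$. *)

theory Defs
  imports Main "HOL.Real"
begin

text \<open>A vector in R^n is a function nat => real vanishing from index n on.
An m x n matrix is a function nat => nat => real (row, column); only entries
with row < m and column < n are used. A block vector such as x = (x_0,...,x_N)
is a function nat => (nat => real), block i being x i; blocks outside the index
set are the zero function. Block matrices are indexed by block row, block column,
row, column.\<close>

type_synonym vec = "nat \<Rightarrow> real"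
type_synonym mat = "nat \<Rightarrow> nat \<Rightarrow> real"
type_synonym bvec = "nat \<Rightarrow> vec"
type_synonym bmat = "nat \<Rightarrow> nat \<Rightarrow> mat"

definition rvec :: "nat \<Rightarrow> vec set" where
  "rvec n = {v. \<forall>k\<ge>n. v k = 0}"

definition mv :: "nat \<Rightarrow> nat \<Rightarrow> mat \<Rightarrow> vec \<Rightarrow> vec" where
  "mv m n M v = (\<lambda>r. if r < m then (\<Sum>c<n. M r c * v c) else 0)"

definition nonpos :: "nat \<Rightarrow> vec \<Rightarrow> bool" where
  "nonpos q v \<longleftrightarrow> (\<forall>k<q. v k \<le> 0)"

definition prodset :: "nat set \<Rightarrow> (nat \<Rightarrow> vec set) \<Rightarrow> bvec set" where
  "prodset I A = {x. (\<forall>i\<in>I. x i \<in> A i) \<and> (\<forall>i. i \<notin> I \<longrightarrow> x i = (\<lambda>_. 0))}"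

definition bmv :: "nat set \<Rightarrow> nat set \<Rightarrow> (nat \<Rightarrow> nat) \<Rightarrow> (nat \<Rightarrow> nat) \<Rightarrow> bmat \<Rightarrow> bvec \<Rightarrow> bvec" where
  "bmv Irow Icol m n M v =
     (\<lambda>i. if i \<in> Irow then (\<lambda>r. \<Sum>j\<in>Icol. mv (m i) (n j) (M i j) (v j) r) else (\<lambda>_. 0))"

definition bprod :: "nat set \<Rightarrow> (nat \<Rightarrow> nat) \<Rightarrow> bmat \<Rightarrow> bmat \<Rightarrow> bmat" where
  "bprod K dk M D = (\<lambda>i j r c. \<Sum>k\<in>K. \<Sum>s<dk k. M i k r s * D k j s c)"

definition is_bident :: "nat \<Rightarrow> (nat \<Rightarrow> nat) \<Rightarrow> bmat \<Rightarrow> bool" where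
  "is_bident N p M \<longleftrightarrow> (\<forall>i\<in>{1..N}. \<forall>j\<in>{1..N}. \<forall>r<p i. \<forall>c<p j.
      M i j r c = (if i = j \<and> r = c then 1 else 0))"

definition Cmat :: "bmat \<Rightarrow> bmat" where
  "Cmat Cm = (\<lambda>i j r c. (if i = j \<and> r = c then 1 else 0) - (if i \<noteq> j then Cm i j r c else 0))"

definition Bmat :: "(nat \<Rightarrow> mat) \<Rightarrow> (nat \<Rightarrow> mat) \<Rightarrow> bmat" where
  "Bmat B0 Bii = (\<lambda>i j. if j = 0 then B0 i else if j = i then Bii i else (\<lambda>_ _. 0))"

definition hcpl :: "nat \<Rightarrow> (nat \<Rightarrow> nat) \<Rightarrow> (nat \<Rightarrow> nat) \<Rightarrow> bvec \<Rightarrow> (nat \<Rightarrow> mat) \<Rightarrow> (nat \<Rightarrow> mat)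
     \<Rightarrow> bmat \<Rightarrow> nat \<Rightarrow> bvec \<Rightarrow> bvec \<Rightarrow> vec" where
  "hcpl N d p a B0 Bii Cm i x y =
     (\<lambda>r. a i r - mv (p i) (d 0) (B0 i) (x 0) r - mv (p i) (d i) (Bii i) (x i) r
          + (\<Sum>j\<in>{1..N} - {i}. mv (p i) (p j) (Cm i j) (y j) r))"

definition Sset :: "nat \<Rightarrow> (nat \<Rightarrow> nat) \<Rightarrow> (nat \<Rightarrow> nat) \<Rightarrow> (nat \<Rightarrow> vec set) \<Rightarrow> (nat \<Rightarrow> vec set)
     \<Rightarrow> bvec \<Rightarrow> (nat \<Rightarrow> mat) \<Rightarrow> (nat \<Rightarrow> mat) \<Rightarrow> bmat \<Rightarrow> (bvec \<times> bvec) set" where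
  "Sset N d p X Y a B0 Bii Cm =
     {(x, y). x \<in> prodset {0..N} X \<and> y \<in> prodset {1..N} Y \<and>
              (\<forall>i\<in>{1..N}. y i = hcpl N d p a B0 Bii Cm i x y)}"

definition gfeas :: "nat \<Rightarrow> (nat \<Rightarrow> nat) \<Rightarrow> (bvec \<Rightarrow> vec) \<Rightarrow> (nat \<Rightarrow> vec \<Rightarrow> vec \<Rightarrow> vec) \<Rightarrow> bvec \<Rightarrow> bool" where
  "gfeas N q g0 g x \<longleftrightarrow> nonpos (q 0) (g0 x) \<and> (\<forall>i\<in>{1..N}. nonpos (q i) (g i (x 0) (x i)))"

definition P_sol_on :: "nat \<Rightarrow> (nat \<Rightarrow> nat) \<Rightarrow> (bvec \<Rightarrow> real) \<Rightarrow> (bvec \<Rightarrow> vec)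
     \<Rightarrow> (nat \<Rightarrow> vec \<Rightarrow> vec \<Rightarrow> vec) \<Rightarrow> bvec set \<Rightarrow> bvec \<Rightarrow> bool" where
  "P_sol_on N q f g0 g D x \<longleftrightarrow> x \<in> D \<and> gfeas N q g0 g x \<and>
     (\<forall>x'\<in>D. gfeas N q g0 g x' \<longrightarrow> f x \<le> f x')"

definition MDO_feas :: "nat \<Rightarrow> (nat \<Rightarrow> nat) \<Rightarrow> (nat \<Rightarrow> nat) \<Rightarrow> (nat \<Rightarrow> nat) \<Rightarrow> (nat \<Rightarrow> vec set)
     \<Rightarrow> (nat \<Rightarrow> vec set) \<Rightarrow> (bvec \<Rightarrow> vec) \<Rightarrow> (nat \<Rightarrow> vec \<Rightarrow> vec \<Rightarrow> vec)
     \<Rightarrow> bvec \<Rightarrow> (nat \<Rightarrow> mat) \<Rightarrow> (nat \<Rightarrow> mat) \<Rightarrow> bmat \<Rightarrow> (bvec \<Rightarrow> bvec \<Rightarrow> bvec)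
     \<Rightarrow> bvec \<Rightarrow> bvec \<Rightarrow> bool" where
  "MDO_feas N d p q X Y g0 g a B0 Bii Cm L x y \<longleftrightarrow>
     x \<in> prodset {0..N} X \<and> y \<in> prodset {1..N} Y \<and> gfeas N q g0 g (L x y) \<and>
     (\<forall>i\<in>{1..N}. y i = hcpl N d p a B0 Bii Cm i x y)"

definition MDO_sol :: "nat \<Rightarrow> (nat \<Rightarrow> nat) \<Rightarrow> (nat \<Rightarrow> nat) \<Rightarrow> (nat \<Rightarrow> nat) \<Rightarrow> (nat \<Rightarrow> vec set)
     \<Rightarrow> (nat \<Rightarrow> vec set) \<Rightarrow> (bvec \<Rightarrow> real) \<Rightarrow> (bvec \<Rightarrow> vec) \<Rightarrow> (nat \<Rightarrow> vec \<Rightarrow> vec \<Rightarrow> vec)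
     \<Rightarrow> bvec \<Rightarrow> (nat \<Rightarrow> mat) \<Rightarrow> (nat \<Rightarrow> mat) \<Rightarrow> bmat \<Rightarrow> (bvec \<Rightarrow> bvec \<Rightarrow> bvec)
     \<Rightarrow> bvec \<Rightarrow> bvec \<Rightarrow> bool" where
  "MDO_sol N d p q X Y f g0 g a B0 Bii Cm L x y \<longleftrightarrow>
     MDO_feas N d p q X Y g0 g a B0 Bii Cm L x y \<and>
     (\<forall>x' y'. MDO_feas N d p q X Y g0 g a B0 Bii Cm L x' y' \<longrightarrow> f (L x y) \<le> f (L x' y'))"

definition PiX :: "nat \<Rightarrow> (nat \<Rightarrow> nat) \<Rightarrow> (nat \<Rightarrow> nat) \<Rightarrow> (nat \<Rightarrow> vec set) \<Rightarrow> (nat \<Rightarrow> vec set)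
     \<Rightarrow> bvec \<Rightarrow> (nat \<Rightarrow> mat) \<Rightarrow> (nat \<Rightarrow> mat) \<Rightarrow> bmat \<Rightarrow> bvec set" where
  "PiX N d p X Y a B0 Bii Cinv =
     {x \<in> prodset {0..N} X.
        bmv {1..N} {1..N} p p Cinv
            (\<lambda>i r. a i r - bmv {1..N} {0..N} p d (Bmat B0 Bii) x i r) \<in> prodset {1..N} Y}"

definition beta :: "nat \<Rightarrow> (nat \<Rightarrow> nat) \<Rightarrow> (nat \<Rightarrow> mat) \<Rightarrow> (nat \<Rightarrow> mat) \<Rightarrow> bmat \<Rightarrow> bmat" where
  "beta N p B0 Bii Cinv = (\<lambda>i j r c. - bprod {1..N} p Cinv (Bmat B0 Bii) i j r c)"

definition alpha :: "nat \<Rightarrow> (nat \<Rightarrow> nat) \<Rightarrow> bvec \<Rightarrow> bmat \<Rightarrow> bvec" where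
  "alpha N p a Cinv = bmv {1..N} {1..N} p p Cinv a"

definition Lspec :: "nat \<Rightarrow> (nat \<Rightarrow> nat) \<Rightarrow> (nat \<Rightarrow> nat) \<Rightarrow> bvec \<Rightarrow> (nat \<Rightarrow> mat) \<Rightarrow> (nat \<Rightarrow> mat)
     \<Rightarrow> bmat \<Rightarrow> bvec \<Rightarrow> bvec \<Rightarrow> bvec" where
  "Lspec N d p a B0 Bii Cinv x y =
     (\<lambda>i. if i = 0 then x 0
          else if i \<in> {1..N} then
            (\<lambda>r. x i r + y i r - alpha N p a Cinv i r
                 - (\<Sum>j\<in>{0..N}. mv (p i) (d j) (beta N p B0 Bii Cinv i j) (x j) r))
          else (\<lambda>_. 0))"

end

theory Submission
  imports Defs
begin

lemma swap4:
  fixes F :: "'a \<Rightarrow> 'b \<Rightarrow> 'c \<Rightarrow> 'd \<Rightarrow> real"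
  assumes "finite J" "\<And>j. finite (C j)" "finite K" "\<And>k. finite (S k)"
  shows "(\<Sum>j\<in>J. \<Sum>c\<in>C j. \<Sum>k\<in>K. \<Sum>s\<in>S k. F j c k s) = (\<Sum>k\<in>K. \<Sum>s\<in>S k. \<Sum>j\<in>J. \<Sum>c\<in>C j. F j c k s)"
proof -
  have "(\<Sum>j\<in>J. \<Sum>c\<in>C j. \<Sum>k\<in>K. \<Sum>s\<in>S k. F j c k s) = (\<Sum>(j,c)\<in>Sigma J C. \<Sum>(k,s)\<in>Sigma K S. F j c k s)"
    using assms by (subst sum.Sigma[symmetric]) (auto simp: sum.Sigma)
  also have "\<dots> = (\<Sum>(k,s)\<in>Sigma K S. \<Sum>(j,c)\<in>Sigma J C. F j c k s)"
    using sum.swap[of "\<lambda>(j,c) (k,s). F j c k s" "Sigma K S" "Sigma J C"] by (simp add: case_prod_beta')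
  also have "\<dots> = (\<Sum>k\<in>K. \<Sum>s\<in>S k. \<Sum>j\<in>J. \<Sum>c\<in>C j. F j c k s)"
    using assms by (subst sum.Sigma[symmetric]) (auto simp: sum.Sigma)
  finally show ?thesis .
qed

definition bap :: "nat \<Rightarrow> (nat\<Rightarrow>nat) \<Rightarrow> bmat \<Rightarrow> bvec \<Rightarrow> nat \<Rightarrow> nat \<Rightarrow> real" where
 "bap N p M v i r = (\<Sum>k\<in>{1..N}. \<Sum>s<p k. M i k r s * v k s)"

lemma mult_if_delta: "(if P then 1 else 0) * (x::real) = (if P then x else 0)" by simp

lemma delta2:
  fixes p :: "nat \<Rightarrow> nat"
  assumes "i \<in> {1..N}" "r < p i"
  shows "(\<Sum>j\<in>{1..N}. \<Sum>t<p j. (if i = j \<and> r = t then 1 else 0) * v j t) = (v i r::real)"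
proof -
  have "(\<Sum>j\<in>{1..N}. \<Sum>t<p j. (if i = j \<and> r = t then 1 else 0) * v j t) = (\<Sum>j\<in>{1..N}. if j = i then v i r else 0)"
  proof (rule sum.cong[OF refl])
    fix j assume "j \<in> {1..N}"
    show "(\<Sum>t<p j. (if i = j \<and> r = t then 1 else 0) * v j t) = (if j = i then v i r else 0)"
      using assms by (cases "j = i") (simp_all add: mult_if_delta sum.delta sum.delta')
  qed
  also have "\<dots> = v i r" using assms by simp
  finally show ?thesis .
qed

lemma inv_lemma:
  assumes I: "is_bident N p (bprod {1..N} p M D)" and i: "i \<in> {1..N}" "r < p i"
  shows "bap N p M (bap N p D v) i r = v i r"
proof -
  have "bap N p M (bap N p D v) i r = (\<Sum>k\<in>{1..N}. \<Sum>s<p k. \<Sum>j\<in>{1..N}. \<Sum>t<p j. M i k r s * D k j s t * v j t)"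
    unfolding bap_def by (simp add: sum_distrib_left mult.assoc)
  also have "\<dots> = (\<Sum>j\<in>{1..N}. \<Sum>t<p j. \<Sum>k\<in>{1..N}. \<Sum>s<p k. M i k r s * D k j s t * v j t)"
    by (rule swap4) auto
  also have "\<dots> = (\<Sum>j\<in>{1..N}. \<Sum>t<p j. (if i = j \<and> r = t then 1 else 0) * v j t)"
  proof (intro sum.cong refl)
    fix j t assume j: "j \<in> {1..N}" and t: "t \<in> {..<p j}"
    have "(\<Sum>k\<in>{1..N}. \<Sum>s<p k. M i k r s * D k j s t * v j t) = bprod {1..N} p M D i j r t * v j t"
      unfolding bprod_def by (simp add: sum_distrib_right)
    also have "\<dots> = (if i = j \<and> r = t then 1 else 0) * v j t"
      using I i j t unfolding is_bident_def by auto
    finally show "(\<Sum>k\<in>{1..N}. \<Sum>s<p k. M i k r s * D k j s t * v j t) = (if i = j \<and> r = t then 1 else 0) * v j t" .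
  qed
  also have "\<dots> = v i r" using delta2 i by blast
  finally show ?thesis .
qed
lemma bap_cong:
  assumes "\<And>k s. k \<in> {1..N} \<Longrightarrow> s < p k \<Longrightarrow> v k s = v' k s"
  shows "bap N p M v i r = bap N p M v' i r"
  unfolding bap_def using assms by (intro sum.cong refl) auto

theorem proposition3:
  fixes N :: nat and d p q :: "nat \<Rightarrow> nat"
    and X Y :: "nat \<Rightarrow> vec set"
    and f :: "bvec \<Rightarrow> real" and g0 :: "bvec \<Rightarrow> vec" and g :: "nat \<Rightarrow> vec \<Rightarrow> vec \<Rightarrow> vec"
    and a :: bvec and B0 Bii :: "nat \<Rightarrow> mat" and Cm Cinv :: bmat
    and L :: "bvec \<Rightarrow> bvec \<Rightarrow> bvec"
  assumes N2: "N \<ge> 2"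
    and dpos: "\<forall>i\<in>{0..N}. d i \<ge> 1" and ppos: "\<forall>i\<in>{1..N}. p i \<ge> 1" and qpos: "\<forall>i\<in>{0..N}. q i \<ge> 1"
    and Xsub: "\<forall>i\<in>{0..N}. X i \<subseteq> rvec (d i)"
    and Ysub: "\<forall>i\<in>{1..N}. Y i \<subseteq> rvec (p i)"
    and g0dim: "\<forall>x\<in>prodset {0..N} X. g0 x \<in> rvec (q 0)"
    and gdim: "\<forall>i\<in>{1..N}. \<forall>u\<in>X 0. \<forall>v\<in>X i. g i u v \<in> rvec (q i)"
    and adim: "\<forall>i\<in>{1..N}. a i \<in> rvec (p i)"
    and Cinv_right: "is_bident N p (bprod {1..N} p (Cmat Cm) Cinv)"
    and Cinv_left: "is_bident N p (bprod {1..N} p Cinv (Cmat Cm))"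
    and L_S: "\<forall>(x, y)\<in>Sset N d p X Y a B0 Bii Cm. L x y = x"
  shows "(\<forall>x y. MDO_sol N d p q X Y f g0 g a B0 Bii Cm L x y \<longleftrightarrow>
            (x, y) \<in> Sset N d p X Y a B0 Bii Cm \<and>
            P_sol_on N q f g0 g (PiX N d p X Y a B0 Bii Cinv) x)
       \<and> ((\<forall>i\<in>{1..N}. p i = d i) \<longrightarrow>
            (\<forall>(x, y)\<in>Sset N d p X Y a B0 Bii Cm. Lspec N d p a B0 Bii Cinv x y = x))"
  proof -
  define w where "w x = (\<lambda>i r. a i r - bmv {1..N} {0..N} p d (Bmat B0 Bii) x i r)" for x
  define z where "z x = bmv {1..N} {1..N} p p Cinv (w x)" for x
  define PX where "PX = prodset {0..N} X"
  define PY where "PY = prodset {1..N} Y"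
  define S where "S = Sset N d p X Y a B0 Bii Cm"
  have F1: "bmv {1..N} {0..N} p d (Bmat B0 Bii) x i r
      = mv (p i) (d 0) (B0 i) (x 0) r + mv (p i) (d i) (Bii i) (x i) r" if i: "i \<in> {1..N}" for x i r
  proof -
    have "bmv {1..N} {0..N} p d (Bmat B0 Bii) x i r = (\<Sum>j\<in>{0..N}. mv (p i) (d j) (Bmat B0 Bii i j) (x j) r)"
      using i by (simp add: bmv_def)
    also have "\<dots> = (\<Sum>j\<in>{0,i}. mv (p i) (d j) (Bmat B0 Bii i j) (x j) r)"
      using i by (intro sum.mono_neutral_right) (auto simp: Bmat_def mv_def)
    also have "\<dots> = mv (p i) (d 0) (B0 i) (x 0) r + mv (p i) (d i) (Bii i) (x i) r"
      using i by (simp add: Bmat_def)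
    finally show ?thesis .
  qed
  have F2: "bap N p (Cmat Cm) y i r = y i r - (\<Sum>j\<in>{1..N}-{i}. mv (p i) (p j) (Cm i j) (y j) r)"
    if i: "i \<in> {1..N}" and r: "r < p i" for y i r
  proof -
    have "bap N p (Cmat Cm) y i r = (\<Sum>j\<in>{1..N}. \<Sum>t<p j. (if i = j \<and> r = t then 1 else 0) * y j t)
        - (\<Sum>j\<in>{1..N}. \<Sum>t<p j. (if i \<noteq> j then Cm i j r t else 0) * y j t)"
      unfolding bap_def Cmat_def by (simp add: left_diff_distrib sum_subtractf)
    also have "(\<Sum>j\<in>{1..N}. \<Sum>t<p j. (if i = j \<and> r = t then 1 else 0) * y j t) = y i r"
      using delta2 i r by blast
    also have "(\<Sum>j\<in>{1..N}. \<Sum>t<p j. (if i \<noteq> j then Cm i j r t else 0) * y j t)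
        = (\<Sum>j\<in>{1..N}. if j \<noteq> i then mv (p i) (p j) (Cm i j) (y j) r else 0)"
      using r by (intro sum.cong refl) (auto simp: mv_def)
    also have "\<dots> = (\<Sum>j\<in>{1..N}-{i}. mv (p i) (p j) (Cm i j) (y j) r)"
      by (simp add: sum.If_cases) (rule sum.cong; auto)
    finally show ?thesis .
  qed
  have hc: "y i = hcpl N d p a B0 Bii Cm i x y \<longleftrightarrow> (\<forall>r<p i. bap N p (Cmat Cm) y i r = w x i r)"
    if i: "i \<in> {1..N}" and y: "y \<in> PY" for x y i
  proof -
    have out: "y i r = 0 \<and> hcpl N d p a B0 Bii Cm i x y r = 0" if r: "\<not> r < p i" for r
    proof -
      have "y i \<in> rvec (p i)" using y i Ysub unfolding PY_def prodset_def by blast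
      moreover have "a i \<in> rvec (p i)" using adim i by blast
      ultimately show ?thesis using r unfolding rvec_def hcpl_def mv_def by auto
    qed
    have inn: "hcpl N d p a B0 Bii Cm i x y r = w x i r + (\<Sum>j\<in>{1..N}-{i}. mv (p i) (p j) (Cm i j) (y j) r)"
      for r
      unfolding hcpl_def w_def using F1[OF i] by simp
    show ?thesis
    proof
      assume e: "y i = hcpl N d p a B0 Bii Cm i x y"
      show "\<forall>r<p i. bap N p (Cmat Cm) y i r = w x i r"
      proof (intro allI impI)
        fix r assume r: "r < p i"
        have "y i r = hcpl N d p a B0 Bii Cm i x y r" using e by simp
        then show "bap N p (Cmat Cm) y i r = w x i r" using F2[where y=y and i=i and r=r, OF i r] inn[of r] by simp
      qed
    next
      assume e: "\<forall>r<p i. bap N p (Cmat Cm) y i r = w x i r"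
      show "y i = hcpl N d p a B0 Bii Cm i x y"
      proof
        fix r show "y i r = hcpl N d p a B0 Bii Cm i x y r"
        proof (cases "r < p i")
          case True then show ?thesis using e F2[where y=y and i=i and r=r, OF i True] inn[of r] by simp
        next
          case False then show ?thesis using out by simp
        qed
      qed
    qed
  qed
  have SC: "(x, y) \<in> S \<longleftrightarrow> x \<in> PX \<and> y \<in> PY \<and> (\<forall>i\<in>{1..N}. \<forall>r<p i. bap N p (Cmat Cm) y i r = w x i r)"
    for x y
    unfolding S_def Sset_def using hc by (auto simp: PX_def PY_def)
  have zbap: "z x k s = bap N p Cinv (w x) k s" if "k \<in> {1..N}" "s < p k" for x k s
    using that unfolding z_def bmv_def mv_def bap_def by simp
  have zout: "z x k s = 0" if "k \<notin> {1..N} \<or> \<not> s < p k" for x k s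
    using that unfolding z_def bmv_def mv_def by auto
  have Key1: "y = z x" if "(x, y) \<in> S" for x y
  proof (intro ext)
    fix i r
    have x: "x \<in> PX" and y: "y \<in> PY" and e: "\<forall>i\<in>{1..N}. \<forall>r<p i. bap N p (Cmat Cm) y i r = w x i r"
      using that SC by auto
    show "y i r = z x i r"
    proof (cases "i \<in> {1..N} \<and> r < p i")
      case True
      then have "z x i r = bap N p Cinv (w x) i r" using zbap by blast
      also have "\<dots> = bap N p Cinv (bap N p (Cmat Cm) y) i r"
        using e by (intro bap_cong) auto
      also have "\<dots> = y i r" using inv_lemma[OF Cinv_left] True by blast
      finally show ?thesis by simp
    next
      case False
      have "y i r = 0"
      proof (cases "i \<in> {1..N}")
        case True
        then have "y i \<in> rvec (p i)" using y Ysub unfolding PY_def prodset_def by blast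
        then show ?thesis using False True unfolding rvec_def by auto
      next
        case False then show ?thesis using y unfolding PY_def prodset_def by auto
      qed
      then show ?thesis using zout False by auto
    qed
  qed
  have Key2: "(x, z x) \<in> S" if "x \<in> PX" "z x \<in> PY" for x
  proof -
    have "bap N p (Cmat Cm) (z x) i r = w x i r" if i: "i \<in> {1..N}" and r: "r < p i" for i r
    proof -
      have "bap N p (Cmat Cm) (z x) i r = bap N p (Cmat Cm) (bap N p Cinv (w x)) i r"
        using zbap by (intro bap_cong) auto
      also have "\<dots> = w x i r" using inv_lemma[OF Cinv_right] i r by blast
      finally show ?thesis .
    qed
    then show ?thesis using SC that by auto
  qed
  have PiX_eq: "PiX N d p X Y a B0 Bii Cinv = {x \<in> PX. z x \<in> PY}"
    unfolding PiX_def z_def w_def PX_def PY_def by simp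
  have SP: "x \<in> PiX N d p X Y a B0 Bii Cinv" if "(x, y) \<in> S" for x y
    using Key1[OF that] SC that PiX_eq by auto
  have PS: "(x, z x) \<in> S" if "x \<in> PiX N d p X Y a B0 Bii Cinv" for x
    using Key2 that PiX_eq by auto
  have LS: "L x y = x" if "(x, y) \<in> S" for x y
    using L_S that S_def by auto
  have MF: "MDO_feas N d p q X Y g0 g a B0 Bii Cm L x y \<longleftrightarrow> (x, y) \<in> S \<and> gfeas N q g0 g x" for x y
    unfolding MDO_feas_def using LS by (auto simp: S_def Sset_def)
  have part1: "MDO_sol N d p q X Y f g0 g a B0 Bii Cm L x y \<longleftrightarrow>
            (x, y) \<in> S \<and> P_sol_on N q f g0 g (PiX N d p X Y a B0 Bii Cinv) x" for x y
  proof
    assume m: "MDO_sol N d p q X Y f g0 g a B0 Bii Cm L x y"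
    then have s: "(x, y) \<in> S" and gx: "gfeas N q g0 g x" and
      mn: "\<And>x' y'. (x', y') \<in> S \<Longrightarrow> gfeas N q g0 g x' \<Longrightarrow> f (L x y) \<le> f (L x' y')"
      unfolding MDO_sol_def using MF by auto
    have "f x \<le> f x'" if "x' \<in> PiX N d p X Y a B0 Bii Cinv" "gfeas N q g0 g x'" for x'
      using mn[OF PS[OF that(1)] that(2)] LS[OF s] LS[OF PS[OF that(1)]] by simp
    then show "(x, y) \<in> S \<and> P_sol_on N q f g0 g (PiX N d p X Y a B0 Bii Cinv) x"
      using s gx SP[OF s] unfolding P_sol_on_def by auto
  next
    assume r: "(x, y) \<in> S \<and> P_sol_on N q f g0 g (PiX N d p X Y a B0 Bii Cinv) x"
    then have s: "(x, y) \<in> S" and gx: "gfeas N q g0 g x" and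
      mn: "\<And>x'. x' \<in> PiX N d p X Y a B0 Bii Cinv \<Longrightarrow> gfeas N q g0 g x' \<Longrightarrow> f x \<le> f x'"
      unfolding P_sol_on_def by auto
    show "MDO_sol N d p q X Y f g0 g a B0 Bii Cm L x y"
      unfolding MDO_sol_def MF using s gx mn SP LS by auto
  qed
  have part2: "Lspec N d p a B0 Bii Cinv x y = x" if s: "(x, y) \<in> S" for x y
  proof (intro ext)
    fix i r
    have y: "y = z x" using Key1[OF s] .
    have x: "x \<in> PX" using s SC by auto
    show "Lspec N d p a B0 Bii Cinv x y i r = x i r"
    proof (cases "i = 0")
      case True then show ?thesis by (simp add: Lspec_def)
    next
      case i0: False
      show ?thesis
      proof (cases "i \<in> {1..N}")
        case False
        then have "i \<notin> {0..N}" using i0 by auto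
        then show ?thesis using x i0 False unfolding PX_def prodset_def Lspec_def by auto
      next
        case i: True
        have "y i r = alpha N p a Cinv i r + (\<Sum>j\<in>{0..N}. mv (p i) (d j) (beta N p B0 Bii Cinv i j) (x j) r)"
        proof (cases "r < p i")
          case False
          then show ?thesis using y zout unfolding alpha_def bmv_def mv_def by simp
        next
          case r: True
          have al: "alpha N p a Cinv i r = bap N p Cinv a i r"
            using i r unfolding alpha_def bmv_def mv_def bap_def by simp
          have "y i r = bap N p Cinv (w x) i r" using y zbap i r by simp
          also have "\<dots> = bap N p Cinv a i r - (\<Sum>k\<in>{1..N}. \<Sum>s<p k. Cinv i k r s *
                 (\<Sum>j\<in>{0..N}. \<Sum>c<d j. Bmat B0 Bii k j s c * x j c))"
          proof -
            have "bap N p Cinv (w x) i r = (\<Sum>k\<in>{1..N}. \<Sum>s<p k. Cinv i k r s * a k s - Cinv i k r s *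
                 (\<Sum>j\<in>{0..N}. \<Sum>c<d j. Bmat B0 Bii k j s c * x j c))"
              unfolding bap_def w_def
              by (intro sum.cong refl) (simp add: right_diff_distrib bmv_def mv_def)
            then show ?thesis by (simp add: sum_subtractf bap_def)
          qed
          also have "(\<Sum>k\<in>{1..N}. \<Sum>s<p k. Cinv i k r s *
                 (\<Sum>j\<in>{0..N}. \<Sum>c<d j. Bmat B0 Bii k j s c * x j c))
              = (\<Sum>k\<in>{1..N}. \<Sum>s<p k. \<Sum>j\<in>{0..N}. \<Sum>c<d j. Cinv i k r s * Bmat B0 Bii k j s c * x j c)"
            by (simp add: sum_distrib_left mult.assoc)
          also have "\<dots> = (\<Sum>j\<in>{0..N}. \<Sum>c<d j. \<Sum>k\<in>{1..N}. \<Sum>s<p k. Cinv i k r s * Bmat B0 Bii k j s c * x j c)"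
            by (rule swap4[symmetric]) auto
          also have "\<dots> = - (\<Sum>j\<in>{0..N}. mv (p i) (d j) (beta N p B0 Bii Cinv i j) (x j) r)"
            using r unfolding mv_def beta_def bprod_def
            by (simp add: sum_distrib_right sum_negf[symmetric])
          finally show ?thesis using al by simp
        qed
        then show ?thesis using i i0 unfolding Lspec_def by simp
      qed
    qed
  qed
  show ?thesis using part1 part2 unfolding S_def by auto
qed

end
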